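(* Let $(\mathcal{S},\widehat{\mathcal{S}},\sigma,\tau,\iota)$ be a duplicated category of sets. Then the functors $\sigma:\mathcal{S}\to\widehat{\mathcal{S}}$ and $\tau:\mathcal{S}\to\widehat{\mathcal{S}}$ are faithful.
   Context: A duplicated category of sets is a quintet $(\mathcal{S},\widehat{\mathcal{S}},\sigma,\tau,\iota)$ such that: (i) $\mathcal{S}$ and $\widehat{\mathcal{S}}$ are categories satisfying Lawvere's axioms of the Elementary Theory of the Category of Sets (ETCS), i.e. each is a well-pointed topos with a natural numbers object satisfying the axiom of choice; (ii) $\sigma:\mathcal{S}\to\widehat{\mathcal{S}}$ is a functor preserving all finite limits, the subobject classifier $2$, exponentials and natural numbers objects; (iii) $\tau:\mathcal{S}\to\widehat{\mathcal{S}}$ is a functor preserving all finite limits; (iv) $\iota:\sigma\to\tau$ is a natural transformation such that $\iota_X=\mathrm{id}_{\sigma(X)}=\mathrm{id}_{\tau(X)}$ for every finite object $X$ of $\mathcal{S}$. *)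

theory Defs
  imports Main
begin

text \<open>Elementary (carrier-based) category theory, sufficient to state ETCS and
  duplicated categories of sets. Composition convention: cmp C g f = g after f.\<close>

record ('o, 'a) cat =
  obj :: "'o set"
  arr :: "'a set"
  cdom :: "'a \<Rightarrow> 'o"
  ccod :: "'a \<Rightarrow> 'o"
  cmp :: "'a \<Rightarrow> 'a \<Rightarrow> 'a"
  cid :: "'o \<Rightarrow> 'a"

definition hom :: "('o, 'a) cat \<Rightarrow> 'o \<Rightarrow> 'o \<Rightarrow> 'a set" where
  "hom C X Y = {f \<in> arr C. cdom C f = X \<and> ccod C f = Y}"

definition category :: "('o, 'a) cat \<Rightarrow> bool" where
  "category C \<longleftrightarrow>
     (\<forall>f \<in> arr C. cdom C f \<in> obj C \<and> ccod C f \<in> obj C) \<and>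
     (\<forall>X \<in> obj C. cid C X \<in> hom C X X) \<and>
     (\<forall>f \<in> arr C. \<forall>g \<in> arr C. ccod C f = cdom C g \<longrightarrow>
         cmp C g f \<in> hom C (cdom C f) (ccod C g)) \<and>
     (\<forall>f \<in> arr C. cmp C (cid C (ccod C f)) f = f \<and> cmp C f (cid C (cdom C f)) = f) \<and>
     (\<forall>f \<in> arr C. \<forall>g \<in> arr C. \<forall>h \<in> arr C.
         ccod C f = cdom C g \<and> ccod C g = cdom C h \<longrightarrow>
         cmp C h (cmp C g f) = cmp C (cmp C h g) f)"

definition mono :: "('o, 'a) cat \<Rightarrow> 'a \<Rightarrow> bool" where
  "mono C m \<longleftrightarrow> m \<in> arr C \<and>
     (\<forall>f \<in> arr C. \<forall>g \<in> arr C. ccod C f = cdom C m \<and> ccod C g = cdom C m \<and>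
        cdom C f = cdom C g \<and> cmp C m f = cmp C m g \<longrightarrow> f = g)"

definition epi :: "('o, 'a) cat \<Rightarrow> 'a \<Rightarrow> bool" where
  "epi C e \<longleftrightarrow> e \<in> arr C \<and>
     (\<forall>f \<in> arr C. \<forall>g \<in> arr C. cdom C f = ccod C e \<and> cdom C g = ccod C e \<and>
        ccod C f = ccod C g \<and> cmp C f e = cmp C g e \<longrightarrow> f = g)"

definition iso :: "('o, 'a) cat \<Rightarrow> 'a \<Rightarrow> bool" where
  "iso C f \<longleftrightarrow> f \<in> arr C \<and>
     (\<exists>g \<in> hom C (ccod C f) (cdom C f).
        cmp C g f = cid C (cdom C f) \<and> cmp C f g = cid C (ccod C f))"

definition is_terminal :: "('o, 'a) cat \<Rightarrow> 'o \<Rightarrow> bool" where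
  "is_terminal C T \<longleftrightarrow> T \<in> obj C \<and> (\<forall>X \<in> obj C. \<exists>!f. f \<in> hom C X T)"

definition is_pullback :: "('o, 'a) cat \<Rightarrow> 'a \<Rightarrow> 'a \<Rightarrow> 'o \<Rightarrow> 'a \<Rightarrow> 'a \<Rightarrow> bool" where
  "is_pullback C f g P p q \<longleftrightarrow>
     f \<in> arr C \<and> g \<in> arr C \<and> ccod C f = ccod C g \<and>
     p \<in> hom C P (cdom C f) \<and> q \<in> hom C P (cdom C g) \<and>
     cmp C f p = cmp C g q \<and>
     (\<forall>Z p' q'. p' \<in> hom C Z (cdom C f) \<and> q' \<in> hom C Z (cdom C g) \<and>
        cmp C f p' = cmp C g q' \<longrightarrow>
        (\<exists>!h. h \<in> hom C Z P \<and> cmp C p h = p' \<and> cmp C q h = q'))"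

definition is_product :: "('o, 'a) cat \<Rightarrow> 'o \<Rightarrow> 'o \<Rightarrow> 'o \<Rightarrow> 'a \<Rightarrow> 'a \<Rightarrow> bool" where
  "is_product C A B P p q \<longleftrightarrow>
     A \<in> obj C \<and> B \<in> obj C \<and> p \<in> hom C P A \<and> q \<in> hom C P B \<and>
     (\<forall>Z p' q'. p' \<in> hom C Z A \<and> q' \<in> hom C Z B \<longrightarrow>
        (\<exists>!h. h \<in> hom C Z P \<and> cmp C p h = p' \<and> cmp C q h = q'))"

definition has_finite_limits :: "('o, 'a) cat \<Rightarrow> bool" where
  "has_finite_limits C \<longleftrightarrow> (\<exists>T. is_terminal C T) \<and>
     (\<forall>f \<in> arr C. \<forall>g \<in> arr C. ccod C f = ccod C g \<longrightarrow> (\<exists>P p q. is_pullback C f g P p q))"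

definition is_exponential ::
  "('o, 'a) cat \<Rightarrow> 'o \<Rightarrow> 'o \<Rightarrow> 'o \<Rightarrow> 'o \<Rightarrow> 'a \<Rightarrow> 'a \<Rightarrow> 'a \<Rightarrow> bool" where
  "is_exponential C A B E P p1 p2 ev \<longleftrightarrow>
     B \<in> obj C \<and> is_product C E A P p1 p2 \<and> ev \<in> hom C P B \<and>
     (\<forall>Z Q q1 q2 g. is_product C Z A Q q1 q2 \<and> g \<in> hom C Q B \<longrightarrow>
        (\<exists>!h. h \<in> hom C Z E \<and>
           (\<exists>k. k \<in> hom C Q P \<and> cmp C p1 k = cmp C h q1 \<and> cmp C p2 k = q2 \<and>
                cmp C ev k = g)))"

definition cartesian_closed :: "('o, 'a) cat \<Rightarrow> bool" where
  "cartesian_closed C \<longleftrightarrow>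
     (\<forall>A \<in> obj C. \<forall>B \<in> obj C. \<exists>E P p1 p2 ev. is_exponential C A B E P p1 p2 ev)"

definition is_subobject_classifier :: "('o, 'a) cat \<Rightarrow> 'o \<Rightarrow> 'o \<Rightarrow> 'a \<Rightarrow> bool" where
  "is_subobject_classifier C T Om t \<longleftrightarrow>
     is_terminal C T \<and> t \<in> hom C T Om \<and>
     (\<forall>m. mono C m \<longrightarrow>
        (\<exists>!\<chi>. \<chi> \<in> hom C (ccod C m) Om \<and> (\<exists>u. is_pullback C \<chi> t (cdom C m) m u)))"

definition topos :: "('o, 'a) cat \<Rightarrow> bool" where
  "topos C \<longleftrightarrow> category C \<and> has_finite_limits C \<and> cartesian_closed C \<and>
     (\<exists>T Om t. is_subobject_classifier C T Om t)"

definition is_nno :: "('o, 'a) cat \<Rightarrow> 'o \<Rightarrow> 'o \<Rightarrow> 'a \<Rightarrow> 'a \<Rightarrow> bool" where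
  "is_nno C T N z s \<longleftrightarrow>
     is_terminal C T \<and> z \<in> hom C T N \<and> s \<in> hom C N N \<and>
     (\<forall>X x u. x \<in> hom C T X \<and> u \<in> hom C X X \<longrightarrow>
        (\<exists>!h. h \<in> hom C N X \<and> cmp C h z = x \<and> cmp C h s = cmp C u h))"

definition well_pointed :: "('o, 'a) cat \<Rightarrow> bool" where
  "well_pointed C \<longleftrightarrow>
     (\<forall>T. is_terminal C T \<longrightarrow>
        (\<forall>X Y. \<forall>f \<in> hom C X Y. \<forall>g \<in> hom C X Y.
           (\<forall>x \<in> hom C T X. cmp C f x = cmp C g x) \<longrightarrow> f = g)) \<and>
     (\<exists>X Y. \<exists>f \<in> hom C X Y. \<exists>g \<in> hom C X Y. f \<noteq> g)"

definition axiom_of_choice :: "('o, 'a) cat \<Rightarrow> bool" where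
  "axiom_of_choice C \<longleftrightarrow>
     (\<forall>e. epi C e \<longrightarrow> (\<exists>s \<in> hom C (ccod C e) (cdom C e). cmp C e s = cid C (ccod C e)))"

definition ETCS :: "('o, 'a) cat \<Rightarrow> bool" where
  "ETCS C \<longleftrightarrow> topos C \<and> well_pointed C \<and> (\<exists>T N z s. is_nno C T N z s) \<and>
     axiom_of_choice C"

text \<open>Finite object (Dedekind finiteness: every monic endomorphism is an iso).\<close>
definition finite_obj :: "('o, 'a) cat \<Rightarrow> 'o \<Rightarrow> bool" where
  "finite_obj C X \<longleftrightarrow> X \<in> obj C \<and> (\<forall>m \<in> hom C X X. mono C m \<longrightarrow> iso C m)"

definition "functor" ::
  "('o, 'a) cat \<Rightarrow> ('p, 'b) cat \<Rightarrow> ('o \<Rightarrow> 'p) \<Rightarrow> ('a \<Rightarrow> 'b) \<Rightarrow> bool" where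
  "functor C D Fo Fa \<longleftrightarrow>
     (\<forall>X \<in> obj C. Fo X \<in> obj D) \<and>
     (\<forall>f \<in> arr C. Fa f \<in> hom D (Fo (cdom C f)) (Fo (ccod C f))) \<and>
     (\<forall>X \<in> obj C. Fa (cid C X) = cid D (Fo X)) \<and>
     (\<forall>f \<in> arr C. \<forall>g \<in> arr C. ccod C f = cdom C g \<longrightarrow> Fa (cmp C g f) = cmp D (Fa g) (Fa f))"

definition faithful ::
  "('o, 'a) cat \<Rightarrow> ('p, 'b) cat \<Rightarrow> ('o \<Rightarrow> 'p) \<Rightarrow> ('a \<Rightarrow> 'b) \<Rightarrow> bool" where
  "faithful C D Fo Fa \<longleftrightarrow>
     (\<forall>X Y. \<forall>f \<in> hom C X Y. \<forall>g \<in> hom C X Y. Fa f = Fa g \<longrightarrow> f = g)"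

definition preserves_finite_limits ::
  "('o, 'a) cat \<Rightarrow> ('p, 'b) cat \<Rightarrow> ('o \<Rightarrow> 'p) \<Rightarrow> ('a \<Rightarrow> 'b) \<Rightarrow> bool" where
  "preserves_finite_limits C D Fo Fa \<longleftrightarrow>
     (\<forall>T. is_terminal C T \<longrightarrow> is_terminal D (Fo T)) \<and>
     (\<forall>f g P p q. is_pullback C f g P p q \<longrightarrow>
        is_pullback D (Fa f) (Fa g) (Fo P) (Fa p) (Fa q))"

definition preserves_subobject_classifier ::
  "('o, 'a) cat \<Rightarrow> ('p, 'b) cat \<Rightarrow> ('o \<Rightarrow> 'p) \<Rightarrow> ('a \<Rightarrow> 'b) \<Rightarrow> bool" where
  "preserves_subobject_classifier C D Fo Fa \<longleftrightarrow>
     (\<forall>T Om t. is_subobject_classifier C T Om t \<longrightarrow>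
        is_subobject_classifier D (Fo T) (Fo Om) (Fa t))"

definition preserves_exponentials ::
  "('o, 'a) cat \<Rightarrow> ('p, 'b) cat \<Rightarrow> ('o \<Rightarrow> 'p) \<Rightarrow> ('a \<Rightarrow> 'b) \<Rightarrow> bool" where
  "preserves_exponentials C D Fo Fa \<longleftrightarrow>
     (\<forall>A B E P p1 p2 ev. is_exponential C A B E P p1 p2 ev \<longrightarrow>
        is_exponential D (Fo A) (Fo B) (Fo E) (Fo P) (Fa p1) (Fa p2) (Fa ev))"

definition preserves_nno ::
  "('o, 'a) cat \<Rightarrow> ('p, 'b) cat \<Rightarrow> ('o \<Rightarrow> 'p) \<Rightarrow> ('a \<Rightarrow> 'b) \<Rightarrow> bool" where
  "preserves_nno C D Fo Fa \<longleftrightarrow>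
     (\<forall>T N z s. is_nno C T N z s \<longrightarrow> is_nno D (Fo T) (Fo N) (Fa z) (Fa s))"

definition nat_trans ::
  "('o, 'a) cat \<Rightarrow> ('p, 'b) cat \<Rightarrow> ('o \<Rightarrow> 'p) \<Rightarrow> ('a \<Rightarrow> 'b) \<Rightarrow>
   ('o \<Rightarrow> 'p) \<Rightarrow> ('a \<Rightarrow> 'b) \<Rightarrow> ('o \<Rightarrow> 'b) \<Rightarrow> bool" where
  "nat_trans C D Fo Fa Go Ga \<eta> \<longleftrightarrow>
     (\<forall>X \<in> obj C. \<eta> X \<in> hom D (Fo X) (Go X)) \<and>
     (\<forall>f \<in> arr C. cmp D (\<eta> (ccod C f)) (Fa f) = cmp D (Ga f) (\<eta> (cdom C f)))"

definition duplicated_category_of_sets ::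
  "('o, 'a) cat \<Rightarrow> ('p, 'b) cat \<Rightarrow> ('o \<Rightarrow> 'p) \<Rightarrow> ('a \<Rightarrow> 'b) \<Rightarrow>
   ('o \<Rightarrow> 'p) \<Rightarrow> ('a \<Rightarrow> 'b) \<Rightarrow> ('o \<Rightarrow> 'b) \<Rightarrow> bool" where
  "duplicated_category_of_sets S S' \<sigma>o \<sigma>a \<tau>o \<tau>a \<iota> \<longleftrightarrow>
     ETCS S \<and> ETCS S' \<and>
     functor S S' \<sigma>o \<sigma>a \<and> preserves_finite_limits S S' \<sigma>o \<sigma>a \<and>
     preserves_subobject_classifier S S' \<sigma>o \<sigma>a \<and> preserves_exponentials S S' \<sigma>o \<sigma>a \<and>
     preserves_nno S S' \<sigma>o \<sigma>a \<and>
     functor S S' \<tau>o \<tau>a \<and> preserves_finite_limits S S' \<tau>o \<tau>a \<and>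
     nat_trans S S' \<sigma>o \<sigma>a \<tau>o \<tau>a \<iota> \<and>
     (\<forall>X. finite_obj S X \<longrightarrow> \<sigma>o X = \<tau>o X \<and> \<iota> X = cid S' (\<sigma>o X))"

end

theory Submission
  imports Defs
begin

lemma homD: "f \<in> hom C X Y \<Longrightarrow> f \<in> arr C \<and> cdom C f = X \<and> ccod C f = Y"
  by (simp add: hom_def)

lemma homI: "f \<in> arr C \<Longrightarrow> cdom C f = X \<Longrightarrow> ccod C f = Y \<Longrightarrow> f \<in> hom C X Y"
  by (simp add: hom_def)

lemma comp_hom: "category C \<Longrightarrow> f \<in> hom C X Y \<Longrightarrow> g \<in> hom C Y Z \<Longrightarrow> cmp C g f \<in> hom C X Z"
  unfolding category_def hom_def by auto

lemma assoc: "category C \<Longrightarrow> f \<in> hom C X Y \<Longrightarrow> g \<in> hom C Y Z \<Longrightarrow> h \<in> hom C Z W \<Longrightarrow>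
   cmp C h (cmp C g f) = cmp C (cmp C h g) f"
  unfolding category_def hom_def by auto

lemma id_hom: "category C \<Longrightarrow> X \<in> obj C \<Longrightarrow> cid C X \<in> hom C X X"
  unfolding category_def by auto

lemma id_l: "category C \<Longrightarrow> f \<in> hom C X Y \<Longrightarrow> cmp C (cid C Y) f = f"
  unfolding category_def hom_def by auto

lemma id_r: "category C \<Longrightarrow> f \<in> hom C X Y \<Longrightarrow> cmp C f (cid C X) = f"
  unfolding category_def hom_def by auto

lemma hom_obj: "category C \<Longrightarrow> f \<in> hom C X Y \<Longrightarrow> X \<in> obj C \<and> Y \<in> obj C"
  unfolding category_def hom_def by auto

lemma term_uniq: assumes a: "category C" "is_terminal C T" "f \<in> hom C X T" "g \<in> hom C X T" shows "f = g"
proof -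
  have "X \<in> obj C" using hom_obj[OF a(1) a(3)] by blast
  with a(2) have "\<exists>!f. f \<in> hom C X T" unfolding is_terminal_def by blast
  with a(3,4) show ?thesis by (metis)
qed

lemma term_ex: "is_terminal C T \<Longrightarrow> X \<in> obj C \<Longrightarrow> \<exists>f. f \<in> hom C X T"
  unfolding is_terminal_def by blast

lemma term_obj: "is_terminal C T \<Longrightarrow> T \<in> obj C"
  unfolding is_terminal_def by blast

lemma term_id: "category C \<Longrightarrow> is_terminal C T \<Longrightarrow> f \<in> hom C T T \<Longrightarrow> f = cid C T"
  by (meson id_hom term_obj term_uniq)

lemma wp_ext: assumes "well_pointed C" "is_terminal C T" "f \<in> hom C X Y" "g \<in> hom C X Y"
  "\<And>x. x \<in> hom C T X \<Longrightarrow> cmp C f x = cmp C g x" shows "f = g"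
proof -
  have "\<forall>T. is_terminal C T \<longrightarrow> (\<forall>X Y. \<forall>f\<in>hom C X Y. \<forall>g\<in>hom C X Y.
     (\<forall>x\<in>hom C T X. cmp C f x = cmp C g x) \<longrightarrow> f = g)"
    (is "\<forall>T. ?P T")
    using assms(1) unfolding well_pointed_def by (rule conjunct1)
  then have "?P T" by (rule spec)
  then have h1: "\<forall>X Y. \<forall>f\<in>hom C X Y. \<forall>g\<in>hom C X Y.
     (\<forall>x\<in>hom C T X. cmp C f x = cmp C g x) \<longrightarrow> f = g" using assms(2) by (rule mp)
  have "\<forall>x\<in>hom C T X. cmp C f x = cmp C g x" using assms(5) by blast
  then show ?thesis using h1 assms(3,4) by blast
qed

lemma wp_sep: assumes "well_pointed C" "is_terminal C T" "f \<in> hom C X Y" "g \<in> hom C X Y" "f \<noteq> g"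
  shows "\<exists>x\<in>hom C T X. cmp C f x \<noteq> cmp C g x"
proof (rule ccontr)
  assume "\<not> ?thesis"
  then have "\<And>x. x \<in> hom C T X \<Longrightarrow> cmp C f x = cmp C g x" by blast
  from wp_ext[OF assms(1-4) this] assms(5) show False by simp
qed

lemma wp_pointless: assumes "well_pointed C" "is_terminal C T" "hom C T P = {}"
  "f \<in> hom C P Y" "g \<in> hom C P Y" shows "f = g"
proof (rule wp_ext[OF assms(1,2,4,5)])
  fix x assume "x \<in> hom C T P" with assms(3) show "cmp C f x = cmp C g x" by simp
qed

lemma pointless_from: assumes a: "category C" "g \<in> hom C Z P" "hom C T P = {}" shows "hom C T Z = {}"
proof -
  { fix w assume w: "w \<in> hom C T Z"
    have "cmp C g w \<in> hom C T P" using comp_hom[OF a(1) w a(2)] .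
    with a(3) have False by simp }
  then show ?thesis by blast
qed

lemma functor_hom: "functor C D Fo Fa \<Longrightarrow> f \<in> hom C X Y \<Longrightarrow> Fa f \<in> hom D (Fo X) (Fo Y)"
  unfolding functor_def hom_def by auto

lemma functor_comp: "functor C D Fo Fa \<Longrightarrow> f \<in> hom C X Y \<Longrightarrow> g \<in> hom C Y Z \<Longrightarrow>
   Fa (cmp C g f) = cmp D (Fa g) (Fa f)"
  unfolding functor_def hom_def by auto

lemma pb_terminal:
  assumes C: "category D" and T: "is_terminal D T" and u: "u \<in> hom D T Y"
    and pb: "is_pullback D u u P p q"
  shows "is_terminal D P"
proof -
  have cu: "cdom D u = T" using homD[OF u] by simp
  have p: "p \<in> hom D P T" and q: "q \<in> hom D P T" and sq: "cmp D u p = cmp D u q"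
    using pb cu unfolding is_pullback_def by auto
  have U: "\<And>Z p' q'. p' \<in> hom D Z T \<Longrightarrow> q' \<in> hom D Z T \<Longrightarrow> cmp D u p' = cmp D u q' \<Longrightarrow>
        (\<exists>!h. h \<in> hom D Z P \<and> cmp D p h = p' \<and> cmp D q h = q')"
    using pb cu unfolding is_pullback_def by simp
  have "P \<in> obj D" using hom_obj[OF C p] by simp
  moreover have "\<exists>!f. f \<in> hom D Z P" if Z: "Z \<in> obj D" for Z
  proof -
    obtain t where t: "t \<in> hom D Z T" using term_ex[OF T Z] by blast
    from U[OF t t refl] obtain h where h: "h \<in> hom D Z P" by blast
    moreover have "h2 = h" if h2: "h2 \<in> hom D Z P" for h2
    proof -
      have a1: "cmp D p h \<in> hom D Z T" using comp_hom[OF C h p] .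
      have a2: "cmp D q h \<in> hom D Z T" using comp_hom[OF C h q] .
      have e1: "cmp D p h2 = cmp D p h" using term_uniq[OF C T comp_hom[OF C h2 p] a1] .
      have e2: "cmp D q h2 = cmp D q h" using term_uniq[OF C T comp_hom[OF C h2 q] a2] .
      have "cmp D u (cmp D p h) = cmp D u (cmp D q h)"
        using assoc[OF C h p u] assoc[OF C h q u] sq by simp
      from U[OF a1 a2 this] h h2 e1 e2 show ?thesis by blast
    qed
    ultimately show ?thesis by blast
  qed
  ultimately show ?thesis unfolding is_terminal_def by blast
qed

lemma prod_exists:
  assumes C: "category D" and L: "has_finite_limits D" and T: "is_terminal D T"
    and Z: "Z \<in> obj D" and A: "A \<in> obj D"
  shows "\<exists>Q q1 q2. is_product D Z A Q q1 q2"
proof -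
  obtain tz where tz: "tz \<in> hom D Z T" using term_ex[OF T Z] by blast
  obtain ta where ta: "ta \<in> hom D A T" using term_ex[OF T A] by blast
  have "tz \<in> arr D" "ta \<in> arr D" "ccod D tz = ccod D ta" using homD[OF tz] homD[OF ta] by auto
  then obtain Q q1 q2 where pb: "is_pullback D tz ta Q q1 q2"
    using L unfolding has_finite_limits_def by blast
  have cz: "cdom D tz = Z" and ca: "cdom D ta = A" using homD[OF tz] homD[OF ta] by auto
  have q1: "q1 \<in> hom D Q Z" and q2: "q2 \<in> hom D Q A"
    using pb cz ca unfolding is_pullback_def by auto
  have U: "\<And>W p' q'. p' \<in> hom D W Z \<Longrightarrow> q' \<in> hom D W A \<Longrightarrow> cmp D tz p' = cmp D ta q' \<Longrightarrow>
        (\<exists>!h. h \<in> hom D W Q \<and> cmp D q1 h = p' \<and> cmp D q2 h = q')"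
    using pb cz ca unfolding is_pullback_def by simp
  have "is_product D Z A Q q1 q2"
    unfolding is_product_def
  proof (intro conjI allI impI Z A q1 q2)
    fix W p' q' assume a: "p' \<in> hom D W Z \<and> q' \<in> hom D W A"
    have "cmp D tz p' = cmp D ta q'"
      using term_uniq[OF C T comp_hom[OF C _ tz] comp_hom[OF C _ ta]] a by blast
    then show "\<exists>!h. h \<in> hom D W Q \<and> cmp D q1 h = p' \<and> cmp D q2 h = q'" using U a by blast
  qed
  then show ?thesis by blast
qed

lemma exp_terminal:
  assumes C: "category D" and W: "well_pointed D" and L: "has_finite_limits D"
    and T: "is_terminal D T" and P0: "hom D T P = {}" and z: "z \<in> hom D T N"
    and ex: "is_exponential D P N E Pr p1 p2 ev"
  shows "is_terminal D E"
proof -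
  have prE: "is_product D E P Pr p1 p2" and ev: "ev \<in> hom D Pr N"
    using ex unfolding is_exponential_def by auto
  have Eo: "E \<in> obj D" and Po: "P \<in> obj D" and p1: "p1 \<in> hom D Pr E" and p2: "p2 \<in> hom D Pr P"
    using prE unfolding is_product_def by auto
  have UP: "\<And>Z p' q'. p' \<in> hom D Z E \<Longrightarrow> q' \<in> hom D Z P \<Longrightarrow>
        (\<exists>!h. h \<in> hom D Z Pr \<and> cmp D p1 h = p' \<and> cmp D p2 h = q')"
    using prE unfolding is_product_def by simp
  have UE: "\<And>Z Q q1 q2 g. is_product D Z P Q q1 q2 \<Longrightarrow> g \<in> hom D Q N \<Longrightarrow>
        (\<exists>!h. h \<in> hom D Z E \<and>
           (\<exists>k. k \<in> hom D Q Pr \<and> cmp D p1 k = cmp D h q1 \<and> cmp D p2 k = q2 \<and>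
                cmp D ev k = g))"
    using ex unfolding is_exponential_def by blast
  have "\<exists>!f. f \<in> hom D Z E" if Z: "Z \<in> obj D" for Z
  proof -
    obtain Q q1 q2 where pr: "is_product D Z P Q q1 q2" using prod_exists[OF C L T Z Po] by blast
    have q1: "q1 \<in> hom D Q Z" and q2: "q2 \<in> hom D Q P" using pr unfolding is_product_def by auto
    have Q0: "hom D T Q = {}" using pointless_from[OF C q2 P0] .
    have Qo: "Q \<in> obj D" using hom_obj[OF C q1] by simp
    obtain tQ where tQ: "tQ \<in> hom D Q T" using term_ex[OF T Qo] by blast
    have g: "cmp D z tQ \<in> hom D Q N" using comp_hom[OF C tQ z] .
    note U1 = UE[OF pr g]
    then obtain h0 where h0: "h0 \<in> hom D Z E" by blast
    have prp: "h \<in> hom D Z E \<and>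
           (\<exists>k. k \<in> hom D Q Pr \<and> cmp D p1 k = cmp D h q1 \<and> cmp D p2 k = q2 \<and>
                cmp D ev k = cmp D z tQ)" if h: "h \<in> hom D Z E" for h
    proof -
      have hq: "cmp D h q1 \<in> hom D Q E" using comp_hom[OF C q1 h] .
      obtain k where k: "k \<in> hom D Q Pr" "cmp D p1 k = cmp D h q1" "cmp D p2 k = q2"
        using UP[OF hq q2] by blast
      have "cmp D ev k = cmp D z tQ" using wp_pointless[OF W T Q0 comp_hom[OF C k(1) ev] g] .
      then show ?thesis using h k by blast
    qed
    have "h = h'" if "h \<in> hom D Z E" "h' \<in> hom D Z E" for h h'
      using U1 prp[OF that(1)] prp[OF that(2)] by blast
    then show ?thesis using h0 by blast
  qed
  then show ?thesis using Eo unfolding is_terminal_def by blast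
qed

lemma nno_distinct:
  assumes C: "category D" and W: "well_pointed D" and nno: "is_nno D T N z s"
  shows "z \<noteq> cmp D s z"
proof
  assume eq: "z = cmp D s z"
  have T: "is_terminal D T" and z: "z \<in> hom D T N" and s: "s \<in> hom D N N"
    using nno unfolding is_nno_def by auto
  have R: "\<And>X x u. x \<in> hom D T X \<Longrightarrow> u \<in> hom D X X \<Longrightarrow>
        (\<exists>!h. h \<in> hom D N X \<and> cmp D h z = x \<and> cmp D h s = cmp D u h)"
    using nno unfolding is_nno_def by blast
  obtain X Y f g where f: "f \<in> hom D X Y" and g: "g \<in> hom D X Y" and fg: "f \<noteq> g"
    using W unfolding well_pointed_def by blast
  obtain x where x: "x \<in> hom D T X" and ne: "cmp D f x \<noteq> cmp D g x"
    using wp_sep[OF W T f g fg] by blast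
  define u1 where "u1 = cmp D f x"
  define u2 where "u2 = cmp D g x"
  have u1: "u1 \<in> hom D T Y" unfolding u1_def using comp_hom[OF C x f] .
  have u2: "u2 \<in> hom D T Y" unfolding u2_def using comp_hom[OF C x g] .
  have Yo: "Y \<in> obj D" using hom_obj[OF C f] by simp
  obtain t where t: "t \<in> hom D Y T" using term_ex[OF T Yo] by blast
  have u: "cmp D u2 t \<in> hom D Y Y" using comp_hom[OF C t u2] .
  obtain h where h: "h \<in> hom D N Y" "cmp D h z = u1" "cmp D h s = cmp D (cmp D u2 t) h"
    using R[OF u1 u] by blast
  have hz: "cmp D h z \<in> hom D T Y" using comp_hom[OF C z h(1)] .
  have thz: "cmp D t (cmp D h z) = cid D T" using term_id[OF C T comp_hom[OF C hz t]] .
  have "u1 = cmp D h (cmp D s z)" using h(2) eq by simp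
  also have "\<dots> = cmp D (cmp D h s) z" using assoc[OF C z s h(1)] .
  also have "\<dots> = cmp D (cmp D (cmp D u2 t) h) z" using h(3) by simp
  also have "\<dots> = cmp D (cmp D u2 t) (cmp D h z)" using assoc[OF C z h(1) u] by simp
  also have "\<dots> = cmp D u2 (cmp D t (cmp D h z))" using assoc[OF C hz t u2] by simp
  also have "\<dots> = u2" using thz id_r[OF C u2] by simp
  finally show False using ne u1_def u2_def by simp
qed

lemma exp_collapse:
  assumes C: "category D" and T: "is_terminal D T" and A: "is_terminal D A" and Et: "is_terminal D E"
    and ex: "is_exponential D A B E Pr p1 p2 ev"
    and g1: "g1 \<in> hom D T B" and g2: "g2 \<in> hom D T B"
  shows "g1 = g2"
proof -
  have prE: "is_product D E A Pr p1 p2" and ev: "ev \<in> hom D Pr B"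
    using ex unfolding is_exponential_def by auto
  have p1: "p1 \<in> hom D Pr E" and p2: "p2 \<in> hom D Pr A"
    using prE unfolding is_product_def by auto
  have UP: "\<And>Z p' q'. p' \<in> hom D Z E \<Longrightarrow> q' \<in> hom D Z A \<Longrightarrow>
        (\<exists>!h. h \<in> hom D Z Pr \<and> cmp D p1 h = p' \<and> cmp D p2 h = q')"
    using prE unfolding is_product_def by simp
  have UE: "\<And>Z Q q1 q2 g. is_product D Z A Q q1 q2 \<Longrightarrow> g \<in> hom D Q B \<Longrightarrow>
        (\<exists>!h. h \<in> hom D Z E \<and>
           (\<exists>k. k \<in> hom D Q Pr \<and> cmp D p1 k = cmp D h q1 \<and> cmp D p2 k = q2 \<and>
                cmp D ev k = g))"
    using ex unfolding is_exponential_def by blast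
  have To: "T \<in> obj D" using term_obj[OF T] .
  have Ao: "A \<in> obj D" using term_obj[OF A] .
  obtain q where q: "q \<in> hom D T A" using term_ex[OF A To] by blast
  have iT: "cid D T \<in> hom D T T" using id_hom[OF C To] .
  have pr: "is_product D T A T (cid D T) q"
    unfolding is_product_def
  proof (intro conjI allI impI To Ao iT q)
    fix W p' q' assume a: "p' \<in> hom D W T \<and> q' \<in> hom D W A"
    then have pp: "p' \<in> hom D W T" and qq: "q' \<in> hom D W A" by auto
    have "p' \<in> hom D W T \<and> cmp D (cid D T) p' = p' \<and> cmp D q p' = q'"
      using pp id_l[OF C pp] term_uniq[OF C A comp_hom[OF C pp q] qq] by simp
    moreover have "h = p'" if "h \<in> hom D W T \<and> cmp D (cid D T) h = p' \<and> cmp D q h = q'" for h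
      using that id_l[OF C] by auto
    ultimately show "\<exists>!h. h \<in> hom D W T \<and> cmp D (cid D T) h = p' \<and> cmp D q h = q'" by blast
  qed
  obtain h1 k1 where h1: "h1 \<in> hom D T E" and k1: "k1 \<in> hom D T Pr"
     "cmp D p1 k1 = cmp D h1 (cid D T)" "cmp D p2 k1 = q" "cmp D ev k1 = g1"
    using UE[OF pr g1] by blast
  obtain h2 k2 where h2: "h2 \<in> hom D T E" and k2: "k2 \<in> hom D T Pr"
     "cmp D p1 k2 = cmp D h2 (cid D T)" "cmp D p2 k2 = q" "cmp D ev k2 = g2"
    using UE[OF pr g2] by blast
  have "h1 = h2" using term_uniq[OF C Et h1 h2] .
  have hh: "cmp D h1 (cid D T) \<in> hom D T E" using comp_hom[OF C iT h1] .
  have "k1 = k2" using UP[OF hh q] k1 k2 \<open>h1 = h2\<close> by blast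
  then show ?thesis using k1 k2 by simp
qed

lemma ETCS_parts:
  assumes "ETCS C"
  shows "category C" "has_finite_limits C" "cartesian_closed C" "well_pointed C"
    "\<exists>T N z s. is_nno C T N z s" "\<exists>T Om t. is_subobject_classifier C T Om t"
  using assms unfolding ETCS_def topos_def by auto

lemma sigma_faithful:
  assumes S: "ETCS S" and S': "ETCS S'" and F: "functor S S' Fo Fa"
    and L: "preserves_finite_limits S S' Fo Fa" and E: "preserves_exponentials S S' Fo Fa"
    and NN: "preserves_nno S S' Fo Fa"
  shows "faithful S S' Fo Fa"
  unfolding faithful_def
proof (intro allI ballI impI)
  note Sp = ETCS_parts[OF S] and Dp = ETCS_parts[OF S']
  have C: "category S" and D: "category S'" using Sp Dp by auto
  fix X Y f g assume f: "f \<in> hom S X Y" and g: "g \<in> hom S X Y" and Fe: "Fa f = Fa g"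
  show "f = g"
  proof (rule ccontr)
    assume fg: "f \<noteq> g"
    obtain T N z s where nno: "is_nno S T N z s" using Sp(5) by blast
    have T: "is_terminal S T" and z: "z \<in> hom S T N" and sN: "s \<in> hom S N N"
      using nno unfolding is_nno_def by auto
    obtain x where x: "x \<in> hom S T X" and ne: "cmp S f x \<noteq> cmp S g x"
      using wp_sep[OF Sp(4) T f g fg] by blast
    define a where "a = cmp S f x"
    define b where "b = cmp S g x"
    have a: "a \<in> hom S T Y" unfolding a_def using comp_hom[OF C x f] .
    have b: "b \<in> hom S T Y" unfolding b_def using comp_hom[OF C x g] .
    have ab: "a \<noteq> b" using ne a_def b_def by simp
    have Fab: "Fa a = Fa b" unfolding a_def b_def using functor_comp[OF F x f] functor_comp[OF F x g] Fe by simp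
    have "a \<in> arr S" "b \<in> arr S" "ccod S a = ccod S b" using homD[OF a] homD[OF b] by auto
    then obtain P p q where pb: "is_pullback S a b P p q"
      using Sp(2) unfolding has_finite_limits_def by blast
    have ca: "cdom S a = T" and cb: "cdom S b = T" using homD[OF a] homD[OF b] by auto
    have p: "p \<in> hom S P T" and q: "q \<in> hom S P T" and sq: "cmp S a p = cmp S b q"
      using pb ca cb unfolding is_pullback_def by auto
    have P0: "hom S T P = {}"
    proof (rule ccontr)
      assume "hom S T P \<noteq> {}"
      then obtain w where w: "w \<in> hom S T P" by blast
      have pw: "cmp S p w = cid S T" using term_id[OF C T comp_hom[OF C w p]] .
      have qw: "cmp S q w = cid S T" using term_id[OF C T comp_hom[OF C w q]] .
      have "a = cmp S a (cmp S p w)" using pw id_r[OF C a] by simp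
      also have "\<dots> = cmp S (cmp S a p) w" using assoc[OF C w p a] .
      also have "\<dots> = cmp S (cmp S b q) w" using sq by simp
      also have "\<dots> = cmp S b (cmp S q w)" using assoc[OF C w q b] by simp
      also have "\<dots> = b" using qw id_r[OF C b] by simp
      finally show False using ab by simp
    qed
    have T': "is_terminal S' (Fo T)" using L T unfolding preserves_finite_limits_def by blast
    have pb': "is_pullback S' (Fa a) (Fa b) (Fo P) (Fa p) (Fa q)"
      using L pb unfolding preserves_finite_limits_def by blast
    have Fa_a: "Fa a \<in> hom S' (Fo T) (Fo Y)" using functor_hom[OF F a] .
    have P': "is_terminal S' (Fo P)" using pb_terminal[OF D T' Fa_a] pb' Fab by simp
    have Po: "P \<in> obj S" using hom_obj[OF C p] by simp
    have No: "N \<in> obj S" using hom_obj[OF C z] by simp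
    obtain Ex Pr p1 p2 ev where ex: "is_exponential S P N Ex Pr p1 p2 ev"
      using Sp(3) Po No unfolding cartesian_closed_def by blast
    have Et: "is_terminal S Ex" using exp_terminal[OF C Sp(4) Sp(2) T P0 z ex] .
    have Et': "is_terminal S' (Fo Ex)" using L Et unfolding preserves_finite_limits_def by blast
    have ex': "is_exponential S' (Fo P) (Fo N) (Fo Ex) (Fo Pr) (Fa p1) (Fa p2) (Fa ev)"
      using E ex unfolding preserves_exponentials_def by blast
    have nno': "is_nno S' (Fo T) (Fo N) (Fa z) (Fa s)"
      using NN nno unfolding preserves_nno_def by blast
    have dz: "Fa z \<noteq> cmp S' (Fa s) (Fa z)" using nno_distinct[OF D Dp(4) nno'] .
    have z': "Fa z \<in> hom S' (Fo T) (Fo N)" using functor_hom[OF F z] .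
    have sz': "cmp S' (Fa s) (Fa z) \<in> hom S' (Fo T) (Fo N)"
      using comp_hom[OF D z' functor_hom[OF F sN]] .
    show False using exp_collapse[OF D T' P' Et' ex' z' sz'] dz by simp
  qed
qed

lemma omega_two:
  assumes C: "category S" and W: "well_pointed S" and L: "has_finite_limits S"
    and sc: "is_subobject_classifier S T Om t"
    and c: "c \<in> hom S T Om" and d: "d \<in> hom S T Om" and ct: "c \<noteq> t" and dt: "d \<noteq> t"
  shows "c = d"
proof -
  have T: "is_terminal S T" and t: "t \<in> hom S T Om"
    and CL: "\<And>m. mono S m \<Longrightarrow> (\<exists>!\<chi>. \<chi> \<in> hom S (ccod S m) Om \<and> (\<exists>u. is_pullback S \<chi> t (cdom S m) m u))"
    using sc unfolding is_subobject_classifier_def by auto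
  have "c \<in> arr S" "t \<in> arr S" "ccod S c = ccod S t" using homD[OF c] homD[OF t] by auto
  then obtain U m v where pb: "is_pullback S c t U m v"
    using L unfolding has_finite_limits_def by blast
  have cc: "cdom S c = T" and ct': "cdom S t = T" using homD[OF c] homD[OF t] by auto
  have m: "m \<in> hom S U T" and v: "v \<in> hom S U T" and sq: "cmp S c m = cmp S t v"
    using pb cc ct' unfolding is_pullback_def by auto
  have Uc: "\<And>Z p' q'. p' \<in> hom S Z T \<Longrightarrow> q' \<in> hom S Z T \<Longrightarrow> cmp S c p' = cmp S t q' \<Longrightarrow>
        (\<exists>!h. h \<in> hom S Z U \<and> cmp S m h = p' \<and> cmp S v h = q')"
    using pb cc ct' unfolding is_pullback_def by simp
  have noZ: "hom S T Z = {}" if e: "e \<in> hom S T Om" "e \<noteq> t" and p': "p' \<in> hom S Z T" and q': "q' \<in> hom S Z T"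
     and sq': "cmp S e p' = cmp S t q'" for e Z p' q'
  proof (rule ccontr)
    assume "hom S T Z \<noteq> {}"
    then obtain w where w: "w \<in> hom S T Z" by blast
    have pw: "cmp S p' w = cid S T" using term_id[OF C T comp_hom[OF C w p']] .
    have qw: "cmp S q' w = cid S T" using term_id[OF C T comp_hom[OF C w q']] .
    have "e = cmp S e (cmp S p' w)" using pw id_r[OF C e(1)] by simp
    also have "\<dots> = cmp S (cmp S e p') w" using assoc[OF C w p' e(1)] .
    also have "\<dots> = cmp S (cmp S t q') w" using sq' by simp
    also have "\<dots> = cmp S t (cmp S q' w)" using assoc[OF C w q' t] by simp
    also have "\<dots> = t" using qw id_r[OF C t] by simp
    finally show False using e(2) by simp
  qed
  have U0: "hom S T U = {}" using noZ[OF c ct m v sq] .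
  have mono: "mono S m"
    unfolding mono_def
  proof (intro conjI ballI impI)
    show "m \<in> arr S" using homD[OF m] by simp
    fix f g assume f: "f \<in> arr S" and g: "g \<in> arr S"
      and h: "ccod S f = cdom S m \<and> ccod S g = cdom S m \<and> cdom S f = cdom S g \<and> cmp S m f = cmp S m g"
    have cm: "cdom S m = U" using homD[OF m] by simp
    have f': "f \<in> hom S (cdom S f) U" using f h cm by (simp add: hom_def)
    have g': "g \<in> hom S (cdom S f) U" using g h cm by (simp add: hom_def)
    have "hom S T (cdom S f) = {}" using pointless_from[OF C f' U0] .
    then show "f = g" using wp_pointless[OF W T _ f' g'] by blast
  qed
  have cm: "cdom S m = U" and cm2: "ccod S m = T" using homD[OF m] by auto
  have pbd: "is_pullback S d t U m v"
    unfolding is_pullback_def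
  proof (intro conjI allI impI)
    show "d \<in> arr S" "t \<in> arr S" "ccod S d = ccod S t" using homD[OF d] homD[OF t] by auto
    show "m \<in> hom S U (cdom S d)" using m homD[OF d] by simp
    show "v \<in> hom S U (cdom S t)" using v ct' by simp
    show "cmp S d m = cmp S t v"
      using wp_pointless[OF W T U0 comp_hom[OF C m d] comp_hom[OF C v t]] .
    fix Z p' q' assume a: "p' \<in> hom S Z (cdom S d) \<and> q' \<in> hom S Z (cdom S t) \<and> cmp S d p' = cmp S t q'"
    have p': "p' \<in> hom S Z T" and q': "q' \<in> hom S Z T" using a homD[OF d] ct' by auto
    have Z0: "hom S T Z = {}" using noZ[OF d dt p' q'] a by simp
    have "cmp S c p' = cmp S t q'"
      using wp_pointless[OF W T Z0 comp_hom[OF C p' c] comp_hom[OF C q' t]] .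
    then show "\<exists>!h. h \<in> hom S Z U \<and> cmp S m h = p' \<and> cmp S v h = q'" using Uc[OF p' q'] by blast
  qed
  have Pc: "c \<in> hom S (ccod S m) Om \<and> (\<exists>u. is_pullback S c t (cdom S m) m u)" using c pb cm cm2 by auto
  have Pd: "d \<in> hom S (ccod S m) Om \<and> (\<exists>u. is_pullback S d t (cdom S m) m u)" using d pbd cm cm2 by auto
  show ?thesis using CL[OF mono] Pc Pd by blast
qed

lemma sep_point:
  assumes C: "category S" and sc: "is_subobject_classifier S T Om t"
    and a: "a \<in> hom S T Y" and b: "b \<in> hom S T Y" and ab: "a \<noteq> b"
  shows "\<exists>\<chi>\<in>hom S Y Om. cmp S \<chi> a = t \<and> cmp S \<chi> b \<noteq> t"
proof -
  have T: "is_terminal S T" and t: "t \<in> hom S T Om"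
    and CL: "\<And>m. mono S m \<Longrightarrow> (\<exists>!\<chi>. \<chi> \<in> hom S (ccod S m) Om \<and> (\<exists>u. is_pullback S \<chi> t (cdom S m) m u))"
    using sc unfolding is_subobject_classifier_def by auto
  have mono: "mono S a"
    unfolding mono_def
  proof (intro conjI ballI impI)
    show "a \<in> arr S" using homD[OF a] by simp
    fix f g assume f: "f \<in> arr S" and g: "g \<in> arr S"
      and h: "ccod S f = cdom S a \<and> ccod S g = cdom S a \<and> cdom S f = cdom S g \<and> cmp S a f = cmp S a g"
    have f': "f \<in> hom S (cdom S f) T" using f h homD[OF a] by (simp add: hom_def)
    have g': "g \<in> hom S (cdom S f) T" using g h homD[OF a] by (simp add: hom_def)
    show "f = g" using term_uniq[OF C T f' g'] .
  qed
  obtain \<chi> u where chi: "\<chi> \<in> hom S Y Om" and pb: "is_pullback S \<chi> t T a u"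
    using CL[OF mono] homD[OF a] by auto
  have ct': "cdom S t = T" using homD[OF t] by simp
  have u: "u \<in> hom S T T" and sq: "cmp S \<chi> a = cmp S t u"
    using pb ct' unfolding is_pullback_def by auto
  have U: "\<And>Z p' q'. p' \<in> hom S Z Y \<Longrightarrow> q' \<in> hom S Z T \<Longrightarrow> cmp S \<chi> p' = cmp S t q' \<Longrightarrow>
        (\<exists>!h. h \<in> hom S Z T \<and> cmp S a h = p' \<and> cmp S u h = q')"
    using pb ct' homD[OF chi] unfolding is_pullback_def by simp
  have 1: "cmp S \<chi> a = t" using sq term_id[OF C T u] id_r[OF C t] by simp
  have To: "T \<in> obj S" using term_obj[OF T] .
  have iT: "cid S T \<in> hom S T T" using id_hom[OF C To] .
  have 2: "cmp S \<chi> b \<noteq> t"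
  proof
    assume "cmp S \<chi> b = t"
    then have "cmp S \<chi> b = cmp S t (cid S T)" using id_r[OF C t] by simp
    then obtain h where h: "h \<in> hom S T T" "cmp S a h = b" using U[OF b iT] by blast
    then show False using term_id[OF C T h(1)] id_r[OF C a] ab by simp
  qed
  show ?thesis using chi 1 2 by blast
qed

lemma omega_finite:
  assumes C: "category S" and W: "well_pointed S" and L: "has_finite_limits S"
    and sc: "is_subobject_classifier S T Om t"
    and c: "c \<in> hom S T Om" and ct: "c \<noteq> t"
  shows "finite_obj S Om"
proof -
  have T: "is_terminal S T" and t: "t \<in> hom S T Om"
    using sc unfolding is_subobject_classifier_def by auto
  have pts: "x = t \<or> x = c" if x: "x \<in> hom S T Om" for x
    using omega_two[OF C W L sc x c _ ct] by blast
  have Oo: "Om \<in> obj S" using hom_obj[OF C t] by simp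
  have "iso S m" if m: "m \<in> hom S Om Om" and mo: "mono S m" for m
  proof -
    have mt: "cmp S m t \<in> hom S T Om" using comp_hom[OF C t m] .
    have mc: "cmp S m c \<in> hom S T Om" using comp_hom[OF C c m] .
    have neq: "cmp S m t \<noteq> cmp S m c"
    proof
      assume e: "cmp S m t = cmp S m c"
      have "t \<in> arr S" "c \<in> arr S" "ccod S t = cdom S m" "ccod S c = cdom S m" "cdom S t = cdom S c"
        using homD[OF t] homD[OF c] homD[OF m] by auto
      then have "t = c" using mo e unfolding mono_def by blast
      then show False using ct by simp
    qed
    have inv: "cmp S m (cmp S m x) = x" if x: "x \<in> hom S T Om" for x
    proof -
      have "cmp S m (cmp S m t) = t \<and> cmp S m (cmp S m c) = c"
      proof (cases "cmp S m t = t")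
        case True
        then have "cmp S m c = c" using pts[OF mc] neq by auto
        then show ?thesis using True by simp
      next
        case False
        then have 1: "cmp S m t = c" using pts[OF mt] by auto
        then have "cmp S m c = t" using pts[OF mc] neq by auto
        then show ?thesis using 1 by simp
      qed
      then show ?thesis using pts[OF x] by auto
    qed
    have iO: "cid S Om \<in> hom S Om Om" using id_hom[OF C Oo] .
    have mm: "cmp S m m = cid S Om"
    proof (rule wp_ext[OF W T comp_hom[OF C m m] iO])
      fix x assume x: "x \<in> hom S T Om"
      have "cmp S (cmp S m m) x = cmp S m (cmp S m x)" using assoc[OF C x m m] by simp
      also have "\<dots> = x" using inv[OF x] .
      also have "\<dots> = cmp S (cid S Om) x" using id_l[OF C x] by simp
      finally show "cmp S (cmp S m m) x = cmp S (cid S Om) x" .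
    qed
    show ?thesis unfolding iso_def using m mm homD[OF m] by auto
  qed
  then show ?thesis unfolding finite_obj_def using Oo by blast
qed

lemma term_finite:
  assumes C: "category S" and T: "is_terminal S T"
  shows "finite_obj S T"
proof -
  have To: "T \<in> obj S" using term_obj[OF T] .
  have iT: "cid S T \<in> hom S T T" using id_hom[OF C To] .
  have "iso S m" if m: "m \<in> hom S T T" for m
  proof -
    have "m = cid S T" using term_id[OF C T m] .
    then show ?thesis unfolding iso_def using iT id_l[OF C iT] homD[OF iT] by auto
  qed
  then show ?thesis unfolding finite_obj_def using To by blast
qed

theorem mainTheorem1:
  fixes S :: "('o, 'a) cat" and S' :: "('p, 'b) cat"
    and \<sigma>o \<tau>o :: "'o \<Rightarrow> 'p" and \<sigma>a \<tau>a :: "'a \<Rightarrow> 'b" and \<iota> :: "'o \<Rightarrow> 'b"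
  assumes "duplicated_category_of_sets S S' \<sigma>o \<sigma>a \<tau>o \<tau>a \<iota>"
  shows "faithful S S' \<sigma>o \<sigma>a \<and> faithful S S' \<tau>o \<tau>a"
proof -
  have S: "ETCS S" and S': "ETCS S'" and F: "functor S S' \<sigma>o \<sigma>a"
    and L: "preserves_finite_limits S S' \<sigma>o \<sigma>a" and E: "preserves_exponentials S S' \<sigma>o \<sigma>a"
    and NN: "preserves_nno S S' \<sigma>o \<sigma>a" and G: "functor S S' \<tau>o \<tau>a"
    and nt: "nat_trans S S' \<sigma>o \<sigma>a \<tau>o \<tau>a \<iota>"
    and fin: "\<And>X. finite_obj S X \<Longrightarrow> \<sigma>o X = \<tau>o X \<and> \<iota> X = cid S' (\<sigma>o X)"
    using assms unfolding duplicated_category_of_sets_def by auto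
  have sf: "faithful S S' \<sigma>o \<sigma>a" using sigma_faithful[OF S S' F L E NN] .
  note Sp = ETCS_parts[OF S] and Dp = ETCS_parts[OF S']
  have C: "category S" and D: "category S'" using Sp Dp by auto
  have NT: "\<And>f. f \<in> arr S \<Longrightarrow> cmp S' (\<iota> (ccod S f)) (\<sigma>a f) = cmp S' (\<tau>a f) (\<iota> (cdom S f))"
    using nt unfolding nat_trans_def by blast
  have tf: "faithful S S' \<tau>o \<tau>a"
    unfolding faithful_def
  proof (intro allI ballI impI)
    fix X Y f g assume f: "f \<in> hom S X Y" and g: "g \<in> hom S X Y" and Fe: "\<tau>a f = \<tau>a g"
    show "f = g"
    proof (rule ccontr)
      assume fg: "f \<noteq> g"
      obtain T Om t where sc: "is_subobject_classifier S T Om t" using Sp(6) by blast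
      have T: "is_terminal S T" and t: "t \<in> hom S T Om"
        using sc unfolding is_subobject_classifier_def by auto
      obtain x where x: "x \<in> hom S T X" and ne: "cmp S f x \<noteq> cmp S g x"
        using wp_sep[OF Sp(4) T f g fg] by blast
      define a where "a = cmp S f x"
      define b where "b = cmp S g x"
      have a: "a \<in> hom S T Y" unfolding a_def using comp_hom[OF C x f] .
      have b: "b \<in> hom S T Y" unfolding b_def using comp_hom[OF C x g] .
      have ab: "a \<noteq> b" using ne a_def b_def by simp
      have Gab: "\<tau>a a = \<tau>a b" unfolding a_def b_def using functor_comp[OF G x f] functor_comp[OF G x g] Fe by simp
      obtain \<chi> where chi: "\<chi> \<in> hom S Y Om" and c1: "cmp S \<chi> a = t" and c2: "cmp S \<chi> b \<noteq> t"
        using sep_point[OF C sc a b ab] by blast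
      define c where "c = cmp S \<chi> b"
      have c: "c \<in> hom S T Om" unfolding c_def using comp_hom[OF C b chi] .
      have ct: "c \<noteq> t" using c2 c_def by simp
      have Gtc: "\<tau>a t = \<tau>a c"
        using functor_comp[OF G a chi] functor_comp[OF G b chi] Gab c1 c_def by simp
      have fO: "\<sigma>o Om = \<tau>o Om \<and> \<iota> Om = cid S' (\<sigma>o Om)"
        using fin[OF omega_finite[OF C Sp(4) Sp(2) sc c ct]] .
      have fT: "\<sigma>o T = \<tau>o T \<and> \<iota> T = cid S' (\<sigma>o T)"
        using fin[OF term_finite[OF C T]] .
      have st: "\<sigma>a e = \<tau>a e" if e: "e \<in> hom S T Om" for e
      proof -
        have 1: "\<sigma>a e \<in> hom S' (\<sigma>o T) (\<sigma>o Om)" using functor_hom[OF F e] .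
        have 2: "\<tau>a e \<in> hom S' (\<sigma>o T) (\<sigma>o Om)" using functor_hom[OF G e] fO fT by simp
        have "cmp S' (\<iota> Om) (\<sigma>a e) = cmp S' (\<tau>a e) (\<iota> T)" using NT homD[OF e] by force
        then show ?thesis using fO fT id_l[OF D 1] id_r[OF D 2] by simp
      qed
      have "\<sigma>a t = \<sigma>a c" using st[OF t] st[OF c] Gtc by simp
      then have "t = c" using sf t c unfolding faithful_def by blast
      then show False using ct by simp
    qed
  qed
  show ?thesis using sf tf by simp
qed

end
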